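(* Let $\eta$ be a radial weight. Then $M_\eta:L^1([0,1),\eta)\to L^{1,\infty}([0,1),\eta)$ is bounded with norm at most one; that is, for every $f\in L^1([0,1),\eta)$ and $\lambda>0$, $$\int_{\{t\in(0,1):M_\eta f(t)>\lambda\}}\eta(s)\,ds\le\frac{1}{\lambda}\int_0^1|f(s)|\eta(s)\,ds.$$ In particular, for each $1<p<\infty$, $M_\eta:L^p([0,1),\eta)\to L^p([0,1),\eta)$ is bounded with norm depending only on $p$.
   Context: A radial weight is a nonnegative $\eta\in L^1([0,1))$ with $\widehat{\eta}(r)=\int_r^1\eta(s)\,ds>0$ for all $0\le r<1$. $L^p([0,1),\eta)$ is the space of measurable $f$ on $[0,1)$ with $\int_0^1|f|^p\eta<\infty$, and $L^{1,\infty}([0,1),\eta)$ the corresponding weak-$L^1$ space. For $0<t<1$, $M_\eta f(t)=\sup_{b<t}\frac{\int_b^1|f(s)|\eta(s)\,ds}{\widehat{\eta}(b)}$. *)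

theory Defs
  imports "HOL-Analysis.Analysis"
begin

definition eta_hat :: "(real \<Rightarrow> real) \<Rightarrow> real \<Rightarrow> real" where
  "eta_hat \<eta> r = (LINT s:{r..<1}|lborel. \<eta> s)"

definition radial_weight :: "(real \<Rightarrow> real) \<Rightarrow> bool" where
  "radial_weight \<eta> \<longleftrightarrow>
     set_integrable lborel {0..<1} \<eta> \<and> (\<forall>s\<in>{0..<1}. 0 \<le> \<eta> s) \<and>
     (\<forall>r\<in>{0..<1}. eta_hat \<eta> r > 0)"

definition in_Lp_weighted :: "(real \<Rightarrow> real) \<Rightarrow> real \<Rightarrow> (real \<Rightarrow> real) \<Rightarrow> bool" where
  "in_Lp_weighted \<eta> p f \<longleftrightarrow>
     set_borel_measurable lborel {0..<1} f \<and>
     (\<integral>\<^sup>+ s\<in>{0..<1}. ennreal (\<bar>f s\<bar> powr p * \<eta> s) \<partial>lborel) < \<infinity>"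

definition M_eta :: "(real \<Rightarrow> real) \<Rightarrow> (real \<Rightarrow> real) \<Rightarrow> real \<Rightarrow> real" where
  "M_eta \<eta> f t = (SUP b\<in>{0..<t}. (LINT s:{b..<1}|lborel. \<bar>f s\<bar> * \<eta> s) / eta_hat \<eta> b)"

end

theory Submission
  imports Defs
begin


lemma conv_lint:
  fixes h :: "real \<Rightarrow> real"
  assumes meas: "(\<lambda>s. indicator {0..<1} s * h s) \<in> borel_measurable borel"
   and nn: "\<And>s. s\<in>{0..<1} \<Longrightarrow> 0 \<le> h s"
   and fin: "(\<integral>\<^sup>+ s. ennreal (indicator {0..<1} s * h s) \<partial>lborel) < \<infinity>"
   and b: "0 \<le> b"
  shows "ennreal (LINT s:{b..<1}|lborel. h s) = (\<integral>\<^sup>+ s. ennreal (indicator {b..<1} s * h s) \<partial>lborel)"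
    and "0 \<le> (LINT s:{b..<1}|lborel. h s)"
    and "set_integrable lborel {b..<1} h"
proof -
  have eq: "(\<lambda>s. indicator {b..<1} s * h s) = (\<lambda>s. indicator {b..<1} s * (indicator {0..<1} s * h s))"
    using b by (auto simp: indicator_def fun_eq_iff)
  have m: "(\<lambda>s. indicator {b..<1} s * h s) \<in> borel_measurable lborel"
    unfolding eq using meas by simp
  have nn2: "0 \<le> indicator {b..<1} s * h s" for s
    using nn b by (auto simp: indicator_def)
  have "(\<integral>\<^sup>+ s. ennreal (indicator {b..<1} s * h s) \<partial>lborel) \<le> (\<integral>\<^sup>+ s. ennreal (indicator {0..<1} s * h s) \<partial>lborel)"
    using nn b by (intro nn_integral_mono) (auto simp: indicator_def)
  with fin have fin2: "(\<integral>\<^sup>+ s. ennreal (indicator {b..<1} s * h s) \<partial>lborel) < \<infinity>" by auto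
  have int: "integrable lborel (\<lambda>s. indicator {b..<1} s * h s)"
    by (rule integrableI_nonneg[OF m]) (use nn2 fin2 in auto)
  show "ennreal (LINT s:{b..<1}|lborel. h s) = (\<integral>\<^sup>+ s. ennreal (indicator {b..<1} s * h s) \<partial>lborel)"
    unfolding set_lebesgue_integral_def using nn_integral_eq_integral[OF int] nn2 by simp
  show "0 \<le> (LINT s:{b..<1}|lborel. h s)"
    unfolding set_lebesgue_integral_def using nn2 by (simp add: integral_nonneg)
  show "set_integrable lborel {b..<1} h"
    unfolding set_integrable_def using int by simp
qed

lemma rw_meas:
  assumes "radial_weight \<eta>"
  shows "(\<lambda>s. indicator {0..<1} s * \<eta> s) \<in> borel_measurable borel"
proof -
  have "integrable lborel (\<lambda>s. indicator {0..<1} s *\<^sub>R \<eta> s)"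
    using assms unfolding radial_weight_def set_integrable_def by auto
  then show ?thesis by (simp add: borel_measurable_integrable)
qed

lemma rw_fin:
  assumes "radial_weight \<eta>"
  shows "(\<integral>\<^sup>+ s. ennreal (indicator {0..<1} s * \<eta> s) \<partial>lborel) < \<infinity>"
proof -
  have i: "integrable lborel (\<lambda>s. indicator {0..<1} s * \<eta> s)"
    using assms unfolding radial_weight_def set_integrable_def by auto
  show ?thesis using integrableD(2)[OF i] by (simp add: less_top)
qed

locale wt =
  fixes \<eta> g :: "real \<Rightarrow> real"
  assumes rw: "radial_weight \<eta>"
    and gm: "(\<lambda>s. indicator {0..<1} s * g s) \<in> borel_measurable borel"
    and gfin: "(\<integral>\<^sup>+ s. ennreal (indicator {0..<1} s * (\<bar>g s\<bar> * \<eta> s)) \<partial>lborel) < \<infinity>"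
begin

definition r :: "real \<Rightarrow> real" where
  "r b = (LINT s:{b..<1}|lborel. \<bar>g s\<bar> * \<eta> s) / eta_hat \<eta> b"

lemma eta_nn: "s \<in> {0..<1} \<Longrightarrow> 0 \<le> \<eta> s"
  using rw unfolding radial_weight_def by auto

lemma eta_pos: "b \<in> {0..<1} \<Longrightarrow> 0 < eta_hat \<eta> b"
  using rw unfolding radial_weight_def by auto

lemma etam: "(\<lambda>s. indicator {0..<1} s * \<eta> s) \<in> borel_measurable borel"
  by (rule rw_meas[OF rw])

lemma gem: "(\<lambda>s. indicator {0..<1} s * (\<bar>g s\<bar> * \<eta> s)) \<in> borel_measurable borel"
proof -
  have "(\<lambda>s. indicator {0..<1} s * (\<bar>g s\<bar> * \<eta> s)) = (\<lambda>s. \<bar>indicator {0..<1} s * g s\<bar> * (indicator {0..<1} s * \<eta> s))"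
    by (auto simp: indicator_def fun_eq_iff)
  then show ?thesis using gm etam by simp
qed

lemma F1: assumes "0 \<le> b"
  shows "ennreal (LINT s:{b..<1}|lborel. \<bar>g s\<bar> * \<eta> s) = (\<integral>\<^sup>+ s. ennreal (indicator {b..<1} s * (\<bar>g s\<bar> * \<eta> s)) \<partial>lborel)"
    and "0 \<le> (LINT s:{b..<1}|lborel. \<bar>g s\<bar> * \<eta> s)"
  using conv_lint[OF gem _ gfin assms] eta_nn by auto

lemma F2: assumes "0 \<le> b"
  shows "ennreal (eta_hat \<eta> b) = (\<integral>\<^sup>+ s. ennreal (indicator {b..<1} s * \<eta> s) \<partial>lborel)"
  unfolding eta_hat_def using conv_lint[OF etam _ rw_fin[OF rw] assms] eta_nn by auto

lemma F3: assumes "0 \<le> b" "b \<le> b'" "b' < 1" shows "eta_hat \<eta> b' \<le> eta_hat \<eta> b"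
proof -
  have e1: "ennreal (eta_hat \<eta> b') = (\<integral>\<^sup>+ s. ennreal (indicator {b'..<1} s * \<eta> s) \<partial>lborel)"
    using assms by (intro F2) auto
  have "ennreal (eta_hat \<eta> b') \<le> ennreal (eta_hat \<eta> b)"
    unfolding F2[OF assms(1)] e1 using assms
    by (intro nn_integral_mono) (auto simp: indicator_def intro!: eta_nn)
  moreover have "0 < eta_hat \<eta> b"
    using assms by (intro eta_pos) auto
  ultimately show ?thesis by (simp add: ennreal_le_iff)
qed

definition Kr where "Kr = (LINT s:{0..<1}|lborel. \<bar>g s\<bar> * \<eta> s)"

lemma F4: assumes "0 \<le> b" shows "(LINT s:{b..<1}|lborel. \<bar>g s\<bar> * \<eta> s) \<le> Kr"
proof -
  have "ennreal (LINT s:{b..<1}|lborel. \<bar>g s\<bar> * \<eta> s) \<le> ennreal Kr"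
    unfolding Kr_def F1(1)[OF assms] F1(1)[of 0, simplified] using assms
    by (intro nn_integral_mono) (auto simp: indicator_def intro!: eta_nn)
  then show ?thesis using F1(2)[of 0] by (simp add: ennreal_le_iff Kr_def)
qed

lemma F5: "b \<in> {0..<1} \<Longrightarrow> 0 \<le> r b"
  unfolding r_def using F1(2)[of b] eta_pos[of b]
  by (intro divide_nonneg_nonneg) auto

lemma F6: assumes "t \<in> {0<..<1}" shows "bdd_above (r ` {0..<t})"
proof (rule bdd_aboveI2)
  fix b assume b: "b \<in> {0..<t}"
  have "r b \<le> Kr / eta_hat \<eta> b"
    unfolding r_def using b F4 eta_pos[of b] assms by (auto intro!: divide_right_mono)
  also have "\<dots> \<le> Kr / eta_hat \<eta> t"
    using b assms eta_pos[of t] F3[of b t] F1(2)[of 0] Kr_def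
    by (intro divide_left_mono) auto
  finally show "r b \<le> Kr / eta_hat \<eta> t" .
qed

lemma F7: assumes "t \<in> {0<..<1}"
  shows "lam < M_eta \<eta> g t \<longleftrightarrow> (\<exists>b\<in>{0..<t}. lam < r b)"
proof -
  have "M_eta \<eta> g t = (SUP b\<in>{0..<t}. r b)" unfolding M_eta_def r_def by simp
  then show ?thesis using less_cSUP_iff[of "{0..<t}" r lam] F6[OF assms] assms by auto
qed

lemma F9: assumes "t \<in> {0<..<1}" shows "0 \<le> M_eta \<eta> g t"
proof -
  have "M_eta \<eta> g t = (SUP b\<in>{0..<t}. r b)" unfolding M_eta_def r_def by simp
  moreover have "r 0 \<le> (SUP b\<in>{0..<t}. r b)"
    using assms F6[OF assms] by (intro cSUP_upper) auto
  ultimately show ?thesis using F5[of 0] by auto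
qed

lemma F8: "{t\<in>{0<..<1}. lam < M_eta \<eta> g t} = (\<Union>b\<in>{b\<in>{0..<1}. lam < r b}. {b<..<1})"
proof (intro equalityI subsetI)
  fix t assume "t \<in> {t\<in>{0<..<1}. lam < M_eta \<eta> g t}"
  then show "t \<in> (\<Union>b\<in>{b\<in>{0..<1}. lam < r b}. {b<..<1})"
    using F7 by force
next
  fix t assume "t \<in> (\<Union>b\<in>{b\<in>{0..<1}. lam < r b}. {b<..<1})"
  then obtain b where "b \<in> {0..<1}" "lam < r b" "t \<in> {b<..<1}" by auto
  then show "t \<in> {t\<in>{0<..<1}. lam < M_eta \<eta> g t}" using F7[of t lam] by auto
qed

lemma Eopen: "open {t\<in>{0<..<1}. lam < M_eta \<eta> g t}"
  unfolding F8 by auto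


lemma F2': assumes "0 \<le> b"
  shows "emeasure (density lborel (\<lambda>t. ennreal (indicator {0..<1} t * \<eta> t))) {b..<1} = ennreal (eta_hat \<eta> b)"
proof -
  have "emeasure (density lborel (\<lambda>t. ennreal (indicator {0..<1} t * \<eta> t))) {b..<1}
     = (\<integral>\<^sup>+ t. ennreal (indicator {0..<1} t * \<eta> t) * indicator {b..<1} t \<partial>lborel)"
    using etam by (intro emeasure_density) auto
  also have "\<dots> = (\<integral>\<^sup>+ s. ennreal (indicator {b..<1} s * \<eta> s) \<partial>lborel)"
    using assms by (intro nn_integral_cong) (auto simp: indicator_def)
  finally show ?thesis using F2[OF assms] by simp
qed

lemma weak:
  assumes lam: "0 < lam"
  shows "ennreal lam * emeasure (density lborel (\<lambda>t. ennreal (indicator {0..<1} t * \<eta> t)))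
            {t\<in>{0<..<1}. lam < M_eta \<eta> g t} \<le> ennreal Kr"
proof -
  define D where "D = density lborel (\<lambda>t. ennreal (indicator {0..<1} t * \<eta> t))"
  define B where "B = {b\<in>{0..<1}. lam < r b}"
  define E where "E = {t\<in>{0<..<1}. lam < M_eta \<eta> g t}"
  have EB: "E = (\<Union>b\<in>B. {b<..<1})" unfolding E_def B_def by (rule F8)
  have sD: "sets D = sets borel" unfolding D_def by simp
  have key: "ennreal lam * emeasure D {b..<1} \<le> ennreal Kr" if b: "b \<in> B" for b
  proof -
    have b01: "b \<in> {0..<1}" and lr: "lam < r b" using b unfolding B_def by auto
    have ep: "0 < eta_hat \<eta> b" using eta_pos[OF b01] .
    have "lam * eta_hat \<eta> b < (LINT s:{b..<1}|lborel. \<bar>g s\<bar> * \<eta> s)"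
      using lr ep unfolding r_def by (simp add: pos_less_divide_eq)
    also have "\<dots> \<le> Kr" using F4 b01 by auto
    finally have "lam * eta_hat \<eta> b \<le> Kr" by simp
    then have "ennreal (lam * eta_hat \<eta> b) \<le> ennreal Kr" by (rule ennreal_leI)
    moreover have "emeasure D {b..<1} = ennreal (eta_hat \<eta> b)"
      unfolding D_def using b01 by (intro F2') auto
    ultimately show ?thesis using lam ep by (simp add: ennreal_mult)
  qed
  show ?thesis
  proof (cases "B = {}")
    case True
    then have "E = {}" using EB by auto
    then show ?thesis unfolding E_def[symmetric] by simp
  next
    case False
    define t0 where "t0 = Inf B"
    have bdd: "bdd_below B" unfolding B_def by (rule bdd_belowI[of _ 0]) auto
    have Eeq: "E = {t0<..<1}"
    proof (intro equalityI subsetI)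
      fix t assume "t \<in> E"
      then obtain b where "b \<in> B" "t \<in> {b<..<1}" using EB by auto
      moreover have "t0 \<le> b" unfolding t0_def using \<open>b \<in> B\<close> bdd by (rule cInf_lower)
      ultimately show "t \<in> {t0<..<1}" by auto
    next
      fix t assume t: "t \<in> {t0<..<1}"
      then have "Inf B < t" unfolding t0_def by auto
      then obtain b where "b \<in> B" "b < t" using cInf_less_iff[OF False bdd] by auto
      then show "t \<in> E" using EB t by auto
    qed
    define A where "A n = {t0 + 1 / (real n + 1)..<1}" for n :: nat
    have inc: "incseq A"
    proof (rule incseq_SucI)
      fix n
      have "1 / (real (Suc n) + 1) \<le> 1 / (real n + 1)"
        by (rule divide_left_mono) auto
      then show "A n \<subseteq> A (Suc n)" unfolding A_def by (auto simp del: of_nat_Suc)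
    qed
    have UA: "(\<Union>n. A n) = {t0<..<1}"
    proof (intro equalityI subsetI)
      fix t assume "t \<in> (\<Union>n. A n)"
      then obtain n where "t \<in> A n" by auto
      then have h1: "t0 + 1 / (real n + 1) \<le> t" and h2: "t < 1" unfolding A_def by auto
      have "t0 < t0 + 1 / (real n + 1)" by simp
      then have "t0 < t" using h1 by (rule order.strict_trans2)
      then show "t \<in> {t0<..<1}" using h2 by simp
    next
      fix t assume t: "t \<in> {t0<..<1}"
      then have "0 < t - t0" by auto
      then obtain n where n: "inverse (real (Suc n)) < t - t0" using reals_Archimedean by blast
      then have "1 / (real n + 1) < t - t0" by (simp add: inverse_eq_divide add.commute)
      then have "t0 + 1 / (real n + 1) \<le> t" by linarith
      then have "t \<in> A n" using t unfolding A_def by auto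
      then show "t \<in> (\<Union>n. A n)" by auto
    qed
    have bnd: "ennreal lam * emeasure D (A n) \<le> ennreal Kr" for n
    proof -
      have "Inf B < t0 + 1 / (real n + 1)" unfolding t0_def by simp
      then obtain b where b: "b \<in> B" "b < t0 + 1 / (real n + 1)" using cInf_less_iff[OF False bdd] by auto
      have sub: "A n \<subseteq> {b..<1}" unfolding A_def using b by auto
      have "{b..<1} \<in> sets D" using sD by simp
      then have "emeasure D (A n) \<le> emeasure D {b..<1}" by (rule emeasure_mono[OF sub])
      then have "ennreal lam * emeasure D (A n) \<le> ennreal lam * emeasure D {b..<1}"
        by (rule mult_left_mono) simp
      also have "\<dots> \<le> ennreal Kr" using key[OF b(1)] .
      finally show ?thesis .
    qed
    have rng: "range A \<subseteq> sets D"
    proof (rule image_subsetI)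
      fix n show "A n \<in> sets D" unfolding sD A_def by simp
    qed
    have "emeasure D E = (SUP n. emeasure D (A n))"
      unfolding Eeq UA[symmetric] by (rule SUP_emeasure_incseq[OF rng inc, symmetric])
    then have "ennreal lam * emeasure D E = (SUP n. ennreal lam * emeasure D (A n))"
      by (simp add: SUP_mult_left_ennreal)
    also have "\<dots> \<le> ennreal Kr" by (rule SUP_least) (rule bnd)
    finally show ?thesis unfolding D_def E_def .
  qed
qed


lemma SIg: "0 \<le> b \<Longrightarrow> set_integrable lborel {b..<1} (\<lambda>s. \<bar>g s\<bar> * \<eta> s)"
  using conv_lint(3)[OF gem _ gfin] eta_nn by auto

lemma SIeta: "0 \<le> b \<Longrightarrow> set_integrable lborel {b..<1} \<eta>"
  using conv_lint(3)[OF etam _ rw_fin[OF rw]] eta_nn by auto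

lemma Mdef: "M_eta \<eta> g t = (SUP b\<in>{0..<t}. r b)" unfolding M_eta_def r_def by simp

lemma Mmeas: "(\<lambda>t. indicator {0<..<1} t * M_eta \<eta> g t) \<in> borel_measurable borel"
  unfolding borel_measurable_iff_greater
proof
  fix a :: real
  show "{w \<in> space borel. a < indicator {0<..<1} w * M_eta \<eta> g w} \<in> sets borel"
  proof (cases "a < 0")
    case True
    have "{w \<in> space borel. a < indicator {0<..<1} w * M_eta \<eta> g w} = UNIV"
      using True F9 by (auto simp: indicator_def intro: order.strict_trans2)
    then show ?thesis by simp
  next
    case False
    have "{w \<in> space borel. a < indicator {0<..<1} w * M_eta \<eta> g w} = {t\<in>{0<..<1}. a < M_eta \<eta> g t}"
      using False by (auto simp: indicator_def)
    then show ?thesis using Eopen[of a] by simp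
  qed
qed

lemma Kr_eq: "ennreal Kr = (\<integral>\<^sup>+ s. ennreal (indicator {0..<1} s * (\<bar>g s\<bar> * \<eta> s)) \<partial>lborel)"
  unfolding Kr_def using F1(1)[of 0] by simp

lemma weak2:
  assumes lam: "0 < lam"
  shows "(\<integral>\<^sup>+ t. ennreal (indicator {0..<1} t * \<eta> t) * indicator {t\<in>{0<..<1}. lam < M_eta \<eta> g t} t \<partial>lborel)
     \<le> ennreal (1 / lam) * (\<integral>\<^sup>+ s. ennreal (indicator {0..<1} s * (\<bar>g s\<bar> * \<eta> s)) \<partial>lborel)"
proof -
  define X where "X = (\<integral>\<^sup>+ t. ennreal (indicator {0..<1} t * \<eta> t) * indicator {t\<in>{0<..<1}. lam < M_eta \<eta> g t} t \<partial>lborel)"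
  have "X = emeasure (density lborel (\<lambda>t. ennreal (indicator {0..<1} t * \<eta> t))) {t\<in>{0<..<1}. lam < M_eta \<eta> g t}"
    unfolding X_def using etam Eopen[of lam] by (intro emeasure_density[symmetric]) auto
  then have "ennreal lam * X \<le> ennreal Kr" using weak[OF lam] by simp
  then have "ennreal (1 / lam) * (ennreal lam * X) \<le> ennreal (1 / lam) * ennreal Kr"
    by (rule mult_left_mono) simp
  moreover have "ennreal (1 / lam) * (ennreal lam * X) = X"
    using lam by (simp add: ennreal_mult[symmetric] mult.assoc[symmetric] del: ennreal_mult')
  ultimately show ?thesis unfolding X_def Kr_eq by simp
qed

end

lemma trunc_cmp:
  assumes wf: "wt \<eta> f" and wg: "wt \<eta> g" and c: "0 \<le> c"
    and fg: "\<And>s. s \<in> {0..<1} \<Longrightarrow> \<bar>f s\<bar> \<le> \<bar>g s\<bar> + c"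
    and t: "t \<in> {0<..<1}"
  shows "M_eta \<eta> f t \<le> M_eta \<eta> g t + c"
proof -
  interpret F: wt \<eta> f by (rule wf)
  interpret G: wt \<eta> g by (rule wg)
  show ?thesis unfolding F.Mdef
  proof (rule cSUP_least)
    show "{0..<t} \<noteq> {}" using t by auto
  next
    fix b assume b: "b \<in> {0..<t}"
    then have b0: "0 \<le> b" and b1: "b \<in> {0..<1}" using t by auto
    have ep: "0 < eta_hat \<eta> b" using F.eta_pos[OF b1] .
    have "(LINT s:{b..<1}|lborel. \<bar>f s\<bar> * \<eta> s) \<le> (LINT s:{b..<1}|lborel. \<bar>g s\<bar> * \<eta> s + c * \<eta> s)"
    proof (rule set_integral_mono)
      show "set_integrable lborel {b..<1} (\<lambda>s. \<bar>f s\<bar> * \<eta> s)" using F.SIg[OF b0] .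
      show "set_integrable lborel {b..<1} (\<lambda>s. \<bar>g s\<bar> * \<eta> s + c * \<eta> s)"
        using G.SIg[OF b0] G.SIeta[OF b0] by (intro set_integral_add) auto
      fix s assume "s \<in> {b..<1}"
      then have s: "s \<in> {0..<1}" using b0 by auto
      have "\<bar>f s\<bar> * \<eta> s \<le> (\<bar>g s\<bar> + c) * \<eta> s"
        using fg[OF s] F.eta_nn[OF s] by (rule mult_right_mono)
      then show "\<bar>f s\<bar> * \<eta> s \<le> \<bar>g s\<bar> * \<eta> s + c * \<eta> s" by (simp add: algebra_simps)
    qed
    also have "\<dots> = (LINT s:{b..<1}|lborel. \<bar>g s\<bar> * \<eta> s) + c * eta_hat \<eta> b"
      using G.SIg[OF b0] G.SIeta[OF b0] by (simp add: eta_hat_def)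
    finally have "F.r b \<le> ((LINT s:{b..<1}|lborel. \<bar>g s\<bar> * \<eta> s) + c * eta_hat \<eta> b) / eta_hat \<eta> b"
      unfolding F.r_def using ep by (intro divide_right_mono) auto
    also have "\<dots> = G.r b + c" unfolding G.r_def using ep by (simp add: field_simps)
    also have "G.r b \<le> M_eta \<eta> g t" unfolding G.Mdef
      using G.F6[OF t] b by (intro cSUP_upper) auto
    finally show "F.r b \<le> M_eta \<eta> g t + c" by simp
  qed
qed


lemma setint_eq:
  "(\<integral>\<^sup>+ s\<in>A. ennreal (h s) \<partial>lborel) = (\<integral>\<^sup>+ s. ennreal (indicator A s * h s) \<partial>lborel)"
  by (intro nn_integral_cong) (auto simp: indicator_def)

lemma in_Lp_meas:
  assumes "in_Lp_weighted \<eta> p f"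
  shows "(\<lambda>s. indicator {0..<1} s * f s) \<in> borel_measurable borel"
  using assms unfolding in_Lp_weighted_def set_borel_measurable_def by simp

lemma part1:
  assumes rw: "radial_weight \<eta>" and f: "in_Lp_weighted \<eta> 1 f" and lam: "lam > 0"
  shows "{t\<in>{0<..<1}. M_eta \<eta> f t > lam} \<in> sets lborel \<and>
            (\<integral>\<^sup>+ t\<in>{t\<in>{0<..<1}. M_eta \<eta> f t > lam}. ennreal (\<eta> t) \<partial>lborel)
              \<le> ennreal (1 / lam) * (\<integral>\<^sup>+ s\<in>{0..<1}. ennreal (\<bar>f s\<bar> * \<eta> s) \<partial>lborel)"
proof -
  have fin0: "(\<integral>\<^sup>+ s\<in>{0..<1}. ennreal (\<bar>f s\<bar> powr 1 * \<eta> s) \<partial>lborel) < \<infinity>"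
    using f unfolding in_Lp_weighted_def by auto
  have fin: "(\<integral>\<^sup>+ s. ennreal (indicator {0..<1} s * (\<bar>f s\<bar> * \<eta> s)) \<partial>lborel) < \<infinity>"
    using fin0 unfolding setint_eq by simp
  interpret wt \<eta> f using rw in_Lp_meas[OF f] fin by unfold_locales
  have E: "{t\<in>{0<..<1}. M_eta \<eta> f t > lam} \<in> sets lborel"
    using Eopen[of lam] by simp
  have "(\<integral>\<^sup>+ t\<in>{t\<in>{0<..<1}. M_eta \<eta> f t > lam}. ennreal (\<eta> t) \<partial>lborel)
      = (\<integral>\<^sup>+ t. ennreal (indicator {0..<1} t * \<eta> t) * indicator {t\<in>{0<..<1}. lam < M_eta \<eta> f t} t \<partial>lborel)"
    by (intro nn_integral_cong) (auto simp: indicator_def)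
  also have "\<dots> \<le> ennreal (1 / lam) * (\<integral>\<^sup>+ s. ennreal (indicator {0..<1} s * (\<bar>f s\<bar> * \<eta> s)) \<partial>lborel)"
    by (rule weak2[OF lam])
  also have "\<dots> = ennreal (1 / lam) * (\<integral>\<^sup>+ s\<in>{0..<1}. ennreal (\<bar>f s\<bar> * \<eta> s) \<partial>lborel)"
    unfolding setint_eq ..
  finally show ?thesis using E by simp
qed



lemma abs_le_powr: "1 \<le> p \<Longrightarrow> \<bar>x::real\<bar> \<le> 1 + \<bar>x\<bar> powr p"
proof (cases "\<bar>x\<bar> \<le> 1")
  case True then show ?thesis by (smt (verit) powr_ge_zero)
next
  case False
  assume p: "1 \<le> p"
  have "\<bar>x\<bar> powr 1 \<le> \<bar>x\<bar> powr p" using False p by (intro powr_mono) auto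
  then show ?thesis by simp
qed

lemma Lp_wt:
  assumes rw: "radial_weight \<eta>" and p: "1 < p" and f: "in_Lp_weighted \<eta> p f"
  shows "wt \<eta> f"
proof -
  define F where "F s = indicator {0..<1} s * f s" for s
  define W where "W s = indicator {0..<1} s * \<eta> s" for s
  have [measurable]: "F \<in> borel_measurable borel" unfolding F_def by (rule in_Lp_meas[OF f])
  have [measurable]: "W \<in> borel_measurable borel" unfolding W_def by (rule rw_meas[OF rw])
  have nn: "s \<in> {0..<1} \<Longrightarrow> 0 \<le> \<eta> s" for s using rw unfolding radial_weight_def by auto
  have finp: "(\<integral>\<^sup>+ s. ennreal (indicator {0..<1} s * (\<bar>f s\<bar> powr p * \<eta> s)) \<partial>lborel) < \<infinity>"
    using f unfolding in_Lp_weighted_def setint_eq by simp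
  have e1: "(\<lambda>s. ennreal (indicator {0..<1} s * (\<bar>f s\<bar> powr p * \<eta> s))) = (\<lambda>s. ennreal (\<bar>F s\<bar> powr p * W s))"
    unfolding F_def W_def by (auto simp: fun_eq_iff indicator_def)
  have "(\<integral>\<^sup>+ s. ennreal (indicator {0..<1} s * (\<bar>f s\<bar> * \<eta> s)) \<partial>lborel)
      \<le> (\<integral>\<^sup>+ s. ennreal (W s) + ennreal (\<bar>F s\<bar> powr p * W s) \<partial>lborel)"
  proof (rule nn_integral_mono)
    fix s
    show "ennreal (indicator {0..<1} s * (\<bar>f s\<bar> * \<eta> s)) \<le> ennreal (W s) + ennreal (\<bar>F s\<bar> powr p * W s)"
    proof (cases "s \<in> {0..<1}")
      case True
      have "\<bar>f s\<bar> * \<eta> s \<le> (1 + \<bar>f s\<bar> powr p) * \<eta> s"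
        using abs_le_powr[of p "f s"] p nn[OF True] by (intro mult_right_mono) auto
      then have "ennreal (\<bar>f s\<bar> * \<eta> s) \<le> ennreal (\<eta> s + \<bar>f s\<bar> powr p * \<eta> s)"
        by (intro ennreal_leI) (simp add: algebra_simps)
      also have "\<dots> = ennreal (\<eta> s) + ennreal (\<bar>f s\<bar> powr p * \<eta> s)"
        using nn[OF True] by (intro ennreal_plus) auto
      finally show ?thesis using True unfolding F_def W_def by simp
    next
      case False
      then show ?thesis by simp
    qed
  qed
  also have "\<dots> = (\<integral>\<^sup>+ s. ennreal (W s) \<partial>lborel) + (\<integral>\<^sup>+ s. ennreal (\<bar>F s\<bar> powr p * W s) \<partial>lborel)"
    by (intro nn_integral_add) auto
  also have "\<dots> < \<infinity>"
    using rw_fin[OF rw] finp unfolding W_def[symmetric] e1 by simp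
  finally have fin: "(\<integral>\<^sup>+ s. ennreal (indicator {0..<1} s * (\<bar>f s\<bar> * \<eta> s)) \<partial>lborel) < \<infinity>" .
  show ?thesis using rw in_Lp_meas[OF f] fin by unfold_locales
qed


lemma trunc_weak:
  assumes wf: "wt \<eta> f" and l: "0 < l"
  shows "(\<integral>\<^sup>+ t. ennreal (indicator {0..<1} t * \<eta> t) * indicator {t\<in>{0<..<1}. l \<le> M_eta \<eta> f t} t \<partial>lborel)
     \<le> ennreal (2 / l) * (\<integral>\<^sup>+ s. ennreal (indicator {0..<1} s * (\<bar>f s\<bar> * \<eta> s)) * indicator {0..4 * \<bar>f s\<bar>} l \<partial>lborel)"
proof -
  interpret F: wt \<eta> f by (rule wf)
  define g where "g s = (if l / 4 \<le> \<bar>f s\<bar> then f s else 0)" for s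
  define Fw where "Fw s = indicator {0..<1} s * f s" for s
  have [measurable]: "Fw \<in> borel_measurable borel" unfolding Fw_def by (rule F.gm)
  have eg: "(\<lambda>s. indicator {0..<1} s * g s) = (\<lambda>s. if l / 4 \<le> \<bar>Fw s\<bar> then Fw s else 0)"
    using l unfolding g_def Fw_def by (auto simp: fun_eq_iff indicator_def)
  have gm: "(\<lambda>s. indicator {0..<1} s * g s) \<in> borel_measurable borel"
    unfolding eg by measurable
  have "(\<integral>\<^sup>+ s. ennreal (indicator {0..<1} s * (\<bar>g s\<bar> * \<eta> s)) \<partial>lborel)
     \<le> (\<integral>\<^sup>+ s. ennreal (indicator {0..<1} s * (\<bar>f s\<bar> * \<eta> s)) \<partial>lborel)"
    by (intro nn_integral_mono ennreal_leI) (auto simp: g_def indicator_def intro!: mult_right_mono mult_nonneg_nonneg F.eta_nn)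
  then have gfin: "(\<integral>\<^sup>+ s. ennreal (indicator {0..<1} s * (\<bar>g s\<bar> * \<eta> s)) \<partial>lborel) < \<infinity>"
    using F.gfin by (rule le_less_trans)
  interpret G: wt \<eta> g using F.rw gm gfin by unfold_locales
  have wg: "wt \<eta> g" by unfold_locales
  have sub: "{t\<in>{0<..<1}. l \<le> M_eta \<eta> f t} \<subseteq> {t\<in>{0<..<1}. l / 2 < M_eta \<eta> g t}"
  proof
    fix t assume t: "t \<in> {t\<in>{0<..<1}. l \<le> M_eta \<eta> f t}"
    have "M_eta \<eta> f t \<le> M_eta \<eta> g t + l / 4"
      by (rule trunc_cmp[OF wf wg]) (use l t in \<open>auto simp: g_def\<close>)
    then show "t \<in> {t\<in>{0<..<1}. l / 2 < M_eta \<eta> g t}" using t l by auto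
  qed
  have "(\<integral>\<^sup>+ t. ennreal (indicator {0..<1} t * \<eta> t) * indicator {t\<in>{0<..<1}. l \<le> M_eta \<eta> f t} t \<partial>lborel)
     \<le> (\<integral>\<^sup>+ t. ennreal (indicator {0..<1} t * \<eta> t) * indicator {t\<in>{0<..<1}. l / 2 < M_eta \<eta> g t} t \<partial>lborel)"
    using sub by (intro nn_integral_mono mult_left_mono) (auto simp: indicator_def)
  also have "\<dots> \<le> ennreal (1 / (l / 2)) * (\<integral>\<^sup>+ s. ennreal (indicator {0..<1} s * (\<bar>g s\<bar> * \<eta> s)) \<partial>lborel)"
    using l by (intro G.weak2) auto
  also have "(\<integral>\<^sup>+ s. ennreal (indicator {0..<1} s * (\<bar>g s\<bar> * \<eta> s)) \<partial>lborel)
     = (\<integral>\<^sup>+ s. ennreal (indicator {0..<1} s * (\<bar>f s\<bar> * \<eta> s)) * indicator {0..4 * \<bar>f s\<bar>} l \<partial>lborel)"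
    using l by (intro nn_integral_cong) (auto simp: g_def indicator_def)
  finally show ?thesis by simp
qed


lemma int_powr:
  assumes a: "-1 < a" and c: "0 \<le> c" and k: "0 \<le> k"
  shows "(\<integral>\<^sup>+ l. ennreal (k * l powr a) * indicator {0..c} l \<partial>lborel) = ennreal (k * (c powr (a + 1) / (a + 1)))"
proof -
  have "((\<lambda>x. x powr a) has_integral (c powr (a+1) / (a+1))) {0..c}"
    by (rule has_integral_powr_from_0[OF a c])
  then have "((\<lambda>x. k * x powr a) has_integral (k * (c powr (a+1) / (a+1)))) {0..c}"
    by (rule has_integral_mult_right)
  then show ?thesis
    using nn_integral_has_integral_lebesgue'[where f="\<lambda>x. k * x powr a" and \<Omega>="{0..c}"] k by auto
qed


lemma part2:
  assumes rw: "radial_weight \<eta>" and p: "1 < p" and f: "in_Lp_weighted \<eta> p f"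
  shows "set_borel_measurable lborel {0<..<1} (M_eta \<eta> f) \<and>
     (\<integral>\<^sup>+ t\<in>{0<..<1}. ennreal (M_eta \<eta> f t powr p * \<eta> t) \<partial>lborel)
       \<le> ennreal (2 * p / (p - 1) * 4 powr (p - 1)) * (\<integral>\<^sup>+ s\<in>{0..<1}. ennreal (\<bar>f s\<bar> powr p * \<eta> s) \<partial>lborel)"
proof -
  have wf: "wt \<eta> f" by (rule Lp_wt[OF rw p f])
  interpret F: wt \<eta> f by (rule wf)
  define \<Phi> where "\<Phi> t = indicator {0<..<1} t * M_eta \<eta> f t" for t
  define W where "W t = indicator {0..<1} t * \<eta> t" for t
  define Fw where "Fw s = indicator {0..<1} s * f s" for s
  define C where "C = 2 * p / (p - 1) * 4 powr (p - 1)"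
  have [measurable]: "\<Phi> \<in> borel_measurable borel" unfolding \<Phi>_def by (rule F.Mmeas)
  have [measurable]: "W \<in> borel_measurable borel" unfolding W_def by (rule F.etam)
  have [measurable]: "Fw \<in> borel_measurable borel" unfolding Fw_def by (rule F.gm)
  have Phi_nn: "0 \<le> \<Phi> t" for t unfolding \<Phi>_def using F.F9[of t] by (auto simp: indicator_def)
  have W_nn: "0 \<le> W t" for t unfolding W_def using F.eta_nn[of t] by (auto simp: indicator_def)
  have meas: "set_borel_measurable lborel {0<..<1} (M_eta \<eta> f)"
    unfolding set_borel_measurable_def using F.Mmeas by simp
  define H where "H t l = ennreal (indicator {0<..<1} t * W t) * (ennreal (p * l powr (p - 1)) * indicator {0..\<Phi> t} l)" for t l
  define K where "K s l = ennreal (\<bar>Fw s\<bar> * W s) * (ennreal (2 * p * l powr (p - 2)) * indicator {0..4 * \<bar>Fw s\<bar>} l)" for s l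
  have Hm: "case_prod H \<in> borel_measurable (lborel \<Otimes>\<^sub>M lborel)"
  proof -
    have e: "case_prod H = (\<lambda>x. ennreal (indicator {0<..<1} (fst x) * W (fst x)) * (ennreal (p * snd x powr (p - 1)) *
       (if 0 \<le> snd x \<and> snd x \<le> \<Phi> (fst x) then 1 else 0)))"
      by (auto simp: fun_eq_iff indicator_def H_def)
    show ?thesis unfolding e by measurable
  qed
  have Km: "case_prod K \<in> borel_measurable (lborel \<Otimes>\<^sub>M lborel)"
  proof -
    have e: "case_prod K = (\<lambda>x. ennreal (\<bar>Fw (fst x)\<bar> * W (fst x)) * (ennreal (2 * p * snd x powr (p - 2)) *
       (if 0 \<le> snd x \<and> snd x \<le> 4 * \<bar>Fw (fst x)\<bar> then 1 else 0)))"
      by (auto simp: fun_eq_iff indicator_def K_def)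
    show ?thesis unfolding e by measurable
  qed
  \<comment> \<open>Step 1: layer cake\<close>
  have S1: "(\<integral>\<^sup>+ t\<in>{0<..<1}. ennreal (M_eta \<eta> f t powr p * \<eta> t) \<partial>lborel) = (\<integral>\<^sup>+ t. (\<integral>\<^sup>+ l. H t l \<partial>lborel) \<partial>lborel)"
  proof (intro nn_integral_cong)
    fix t :: real
    have "(\<integral>\<^sup>+ l. H t l \<partial>lborel) = ennreal (indicator {0<..<1} t * W t) *
        (\<integral>\<^sup>+ l. ennreal (p * l powr (p - 1)) * indicator {0..\<Phi> t} l \<partial>lborel)"
      unfolding H_def by (intro nn_integral_cmult) measurable
    also have "(\<integral>\<^sup>+ l. ennreal (p * l powr (p - 1)) * indicator {0..\<Phi> t} l \<partial>lborel) = ennreal (p * (\<Phi> t powr (p - 1 + 1) / (p - 1 + 1)))"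
      using p Phi_nn[of t] by (intro int_powr) auto
    also have "p * (\<Phi> t powr (p - 1 + 1) / (p - 1 + 1)) = \<Phi> t powr p" using p by simp
    finally have e: "(\<integral>\<^sup>+ l. H t l \<partial>lborel) = ennreal (indicator {0<..<1} t * W t) * ennreal (\<Phi> t powr p)" .
    show "ennreal (M_eta \<eta> f t powr p * \<eta> t) * indicator {0<..<1} t = (\<integral>\<^sup>+ l. H t l \<partial>lborel)"
    proof (cases "t \<in> {0<..<1}")
      case True
      then have "W t = \<eta> t" "\<Phi> t = M_eta \<eta> f t" unfolding W_def \<Phi>_def by auto
      then show ?thesis unfolding e using True W_nn[of t]
        by (simp add: ennreal_mult'[symmetric] mult.commute)
    next
      case False
      then show ?thesis unfolding e by simp
    qed
  qed
  have S2: "(\<integral>\<^sup>+ t. (\<integral>\<^sup>+ l. H t l \<partial>lborel) \<partial>lborel) = (\<integral>\<^sup>+ l. (\<integral>\<^sup>+ t. H t l \<partial>lborel) \<partial>lborel)"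
    using lborel_pair.Fubini'[OF Hm] by simp
  \<comment> \<open>Step 3: weak type bound for each level\<close>
  have S3: "(\<integral>\<^sup>+ t. H t l \<partial>lborel) \<le> (\<integral>\<^sup>+ s. K s l \<partial>lborel)" for l
  proof (cases "0 < l")
    case False
    then have "H t l = 0" for t
      unfolding H_def using p by (cases "l = 0") (auto simp: indicator_def)
    then show ?thesis by simp
  next
    case l: True
    have "(\<integral>\<^sup>+ t. H t l \<partial>lborel) = (\<integral>\<^sup>+ t. ennreal (p * l powr (p - 1)) *
        (ennreal (indicator {0..<1} t * \<eta> t) * indicator {t\<in>{0<..<1}. l \<le> M_eta \<eta> f t} t) \<partial>lborel)"
      unfolding H_def W_def \<Phi>_def using l by (intro nn_integral_cong) (auto simp: indicator_def mult_ac)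
    also have "\<dots> = ennreal (p * l powr (p - 1)) *
        (\<integral>\<^sup>+ t. ennreal (indicator {0..<1} t * \<eta> t) * indicator {t\<in>{0<..<1}. l \<le> M_eta \<eta> f t} t \<partial>lborel)"
    proof (intro nn_integral_cmult)
      have e: "(\<lambda>t. ennreal (indicator {0..<1} t * \<eta> t) * indicator {t\<in>{0<..<1}. l \<le> M_eta \<eta> f t} t)
        = (\<lambda>t. ennreal (W t) * (if l \<le> \<Phi> t then 1 else 0))"
        unfolding W_def \<Phi>_def using l by (auto simp: fun_eq_iff indicator_def)
      show "(\<lambda>t. ennreal (indicator {0..<1} t * \<eta> t) * indicator {t\<in>{0<..<1}. l \<le> M_eta \<eta> f t} t) \<in> borel_measurable lborel"
        unfolding e by measurable
    qed
    also have "\<dots> \<le> ennreal (p * l powr (p - 1)) * (ennreal (2 / l) *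
        (\<integral>\<^sup>+ s. ennreal (indicator {0..<1} s * (\<bar>f s\<bar> * \<eta> s)) * indicator {0..4 * \<bar>f s\<bar>} l \<partial>lborel))"
      by (intro mult_left_mono trunc_weak[OF wf l]) simp
    also have "\<dots> = ennreal (2 * p * l powr (p - 2)) *
        (\<integral>\<^sup>+ s. ennreal (indicator {0..<1} s * (\<bar>f s\<bar> * \<eta> s)) * indicator {0..4 * \<bar>f s\<bar>} l \<partial>lborel)"
    proof -
      have "l powr (p - 2) = l powr ((p - 1) - 1)" by simp
      also have "\<dots> = l powr (p - 1) / l powr 1" by (rule powr_diff)
      also have "\<dots> = l powr (p - 1) / l" using l by simp
      finally have "p * l powr (p - 1) * (2 / l) = 2 * p * l powr (p - 2)" by simp
      then show ?thesis using l p by (simp add: ennreal_mult[symmetric] mult.assoc[symmetric] del: ennreal_mult')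
    qed
    also have "\<dots> = (\<integral>\<^sup>+ s. ennreal (2 * p * l powr (p - 2)) *
        (ennreal (indicator {0..<1} s * (\<bar>f s\<bar> * \<eta> s)) * indicator {0..4 * \<bar>f s\<bar>} l) \<partial>lborel)"
    proof (intro nn_integral_cmult[symmetric])
      have e: "(\<lambda>s. ennreal (indicator {0..<1} s * (\<bar>f s\<bar> * \<eta> s)) * indicator {0..4 * \<bar>f s\<bar>} l)
         = (\<lambda>s. ennreal (\<bar>Fw s\<bar> * W s) * (if l \<le> 4 * \<bar>Fw s\<bar> then 1 else 0))"
        unfolding W_def Fw_def using l by (auto simp: fun_eq_iff indicator_def)
      show "(\<lambda>s. ennreal (indicator {0..<1} s * (\<bar>f s\<bar> * \<eta> s)) * indicator {0..4 * \<bar>f s\<bar>} l) \<in> borel_measurable lborel"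
        unfolding e by measurable
    qed
    also have "\<dots> = (\<integral>\<^sup>+ s. K s l \<partial>lborel)"
      unfolding K_def W_def Fw_def by (intro nn_integral_cong) (auto simp: indicator_def mult_ac)
    finally show ?thesis .
  qed
  have S4: "(\<integral>\<^sup>+ l. (\<integral>\<^sup>+ s. K s l \<partial>lborel) \<partial>lborel) = (\<integral>\<^sup>+ s. (\<integral>\<^sup>+ l. K s l \<partial>lborel) \<partial>lborel)"
    using lborel_pair.Fubini'[OF Km] by simp
  have S5: "(\<integral>\<^sup>+ l. K s l \<partial>lborel) = ennreal C * ennreal (indicator {0..<1} s * (\<bar>f s\<bar> powr p * \<eta> s))" for s
  proof -
    define x where "x = \<bar>Fw s\<bar>"
    have x0: "0 \<le> x" unfolding x_def by simp
    have "(\<integral>\<^sup>+ l. K s l \<partial>lborel) = ennreal (x * W s) *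
        (\<integral>\<^sup>+ l. ennreal (2 * p * l powr (p - 2)) * indicator {0..4 * x} l \<partial>lborel)"
      unfolding K_def x_def by (intro nn_integral_cmult) measurable
    also have "(\<integral>\<^sup>+ l. ennreal (2 * p * l powr (p - 2)) * indicator {0..4 * x} l \<partial>lborel)
        = ennreal (2 * p * ((4 * x) powr (p - 2 + 1) / (p - 2 + 1)))"
      using p x0 by (intro int_powr) auto
    also have "ennreal (x * W s) * ennreal (2 * p * ((4 * x) powr (p - 2 + 1) / (p - 2 + 1)))
        = ennreal (x * W s * (2 * p * ((4 * x) powr (p - 2 + 1) / (p - 2 + 1))))"
      using x0 W_nn[of s] p by (intro ennreal_mult'[symmetric]) auto
    also have "x * W s * (2 * p * ((4 * x) powr (p - 2 + 1) / (p - 2 + 1))) = C * (x powr p * W s)"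
    proof -
      have a: "(4 * x) powr (p - 1) = 4 powr (p - 1) * x powr (p - 1)"
        using x0 by (simp add: powr_mult)
      have b: "x * x powr (p - 1) = x powr p"
      proof (cases "x = 0")
        case True then show ?thesis by simp
      next
        case False
        have "x powr (1 + (p - 1)) = x powr 1 * x powr (p - 1)" by (rule powr_add)
        then show ?thesis using x0 by (simp add: abs_of_nonneg)
      qed
      have "x * W s * (2 * p * ((4 * x) powr (p - 2 + 1) / (p - 2 + 1)))
          = (2 * p / (p - 1) * 4 powr (p - 1)) * ((x * x powr (p - 1)) * W s)"
      proof -
        have e0: "p - 2 + 1 = p - 1" by simp
        show ?thesis unfolding e0 a using p by (simp add: field_simps)
      qed
      then show ?thesis unfolding b C_def .
    qed
    also have "x powr p * W s = indicator {0..<1} s * (\<bar>f s\<bar> powr p * \<eta> s)"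
      unfolding x_def Fw_def W_def using p by (auto simp: indicator_def)
    also have "ennreal (C * (indicator {0..<1} s * (\<bar>f s\<bar> powr p * \<eta> s))) = ennreal C * ennreal (indicator {0..<1} s * (\<bar>f s\<bar> powr p * \<eta> s))"
      using p F.eta_nn[of s] unfolding C_def by (intro ennreal_mult) (auto simp: indicator_def)
    finally show ?thesis .
  qed
  have fpm: "(\<lambda>s. ennreal (indicator {0..<1} s * (\<bar>f s\<bar> powr p * \<eta> s))) \<in> borel_measurable lborel"
  proof -
    have e: "(\<lambda>s. ennreal (indicator {0..<1} s * (\<bar>f s\<bar> powr p * \<eta> s))) = (\<lambda>s. ennreal (\<bar>Fw s\<bar> powr p * W s))"
      unfolding Fw_def W_def using p by (auto simp: fun_eq_iff indicator_def)
    show ?thesis unfolding e by measurable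
  qed
  have "(\<integral>\<^sup>+ t\<in>{0<..<1}. ennreal (M_eta \<eta> f t powr p * \<eta> t) \<partial>lborel) = (\<integral>\<^sup>+ l. (\<integral>\<^sup>+ t. H t l \<partial>lborel) \<partial>lborel)"
    using S1 S2 by simp
  also have "\<dots> \<le> (\<integral>\<^sup>+ l. (\<integral>\<^sup>+ s. K s l \<partial>lborel) \<partial>lborel)"
    by (intro nn_integral_mono S3)
  also have "\<dots> = (\<integral>\<^sup>+ s. ennreal C * ennreal (indicator {0..<1} s * (\<bar>f s\<bar> powr p * \<eta> s)) \<partial>lborel)"
    unfolding S4 S5 ..
  also have "\<dots> = ennreal C * (\<integral>\<^sup>+ s. ennreal (indicator {0..<1} s * (\<bar>f s\<bar> powr p * \<eta> s)) \<partial>lborel)"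
    by (intro nn_integral_cmult fpm)
  also have "\<dots> = ennreal C * (\<integral>\<^sup>+ s\<in>{0..<1}. ennreal (\<bar>f s\<bar> powr p * \<eta> s) \<partial>lborel)"
    unfolding setint_eq ..
  finally show ?thesis using meas unfolding C_def by simp
qed


theorem lemma6:
  shows "(\<forall>\<eta> f (lam::real). radial_weight \<eta> \<longrightarrow> in_Lp_weighted \<eta> 1 f \<longrightarrow> lam > 0 \<longrightarrow>
            {t\<in>{0<..<1}. M_eta \<eta> f t > lam} \<in> sets lborel \<and>
            (\<integral>\<^sup>+ t\<in>{t\<in>{0<..<1}. M_eta \<eta> f t > lam}. ennreal (\<eta> t) \<partial>lborel)
              \<le> ennreal (1 / lam) * (\<integral>\<^sup>+ s\<in>{0..<1}. ennreal (\<bar>f s\<bar> * \<eta> s) \<partial>lborel))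
       \<and> (\<forall>p::real. 1 < p \<longrightarrow> (\<exists>C::real. 0 < C \<and>
            (\<forall>\<eta> f. radial_weight \<eta> \<longrightarrow> in_Lp_weighted \<eta> p f \<longrightarrow>
              set_borel_measurable lborel {0<..<1} (M_eta \<eta> f) \<and>
              (\<integral>\<^sup>+ t\<in>{0<..<1}. ennreal (M_eta \<eta> f t powr p * \<eta> t) \<partial>lborel)
                \<le> ennreal C * (\<integral>\<^sup>+ s\<in>{0..<1}. ennreal (\<bar>f s\<bar> powr p * \<eta> s) \<partial>lborel))))"
proof -
  have P1: "\<forall>\<eta> f (lam::real). radial_weight \<eta> \<longrightarrow> in_Lp_weighted \<eta> 1 f \<longrightarrow> lam > 0 \<longrightarrow>
            {t\<in>{0<..<1}. M_eta \<eta> f t > lam} \<in> sets lborel \<and>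
            (\<integral>\<^sup>+ t\<in>{t\<in>{0<..<1}. M_eta \<eta> f t > lam}. ennreal (\<eta> t) \<partial>lborel)
              \<le> ennreal (1 / lam) * (\<integral>\<^sup>+ s\<in>{0..<1}. ennreal (\<bar>f s\<bar> * \<eta> s) \<partial>lborel)"
    using part1 by blast
  have P2: "\<forall>p::real. 1 < p \<longrightarrow> (\<exists>C::real. 0 < C \<and>
            (\<forall>\<eta> f. radial_weight \<eta> \<longrightarrow> in_Lp_weighted \<eta> p f \<longrightarrow>
              set_borel_measurable lborel {0<..<1} (M_eta \<eta> f) \<and>
              (\<integral>\<^sup>+ t\<in>{0<..<1}. ennreal (M_eta \<eta> f t powr p * \<eta> t) \<partial>lborel)
                \<le> ennreal C * (\<integral>\<^sup>+ s\<in>{0..<1}. ennreal (\<bar>f s\<bar> powr p * \<eta> s) \<partial>lborel)))"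
  proof (intro allI impI)
    fix p :: real assume p: "1 < p"
    have C: "0 < 2 * p / (p - 1) * 4 powr (p - 1)" using p by simp
    show "\<exists>C::real. 0 < C \<and>
            (\<forall>\<eta> f. radial_weight \<eta> \<longrightarrow> in_Lp_weighted \<eta> p f \<longrightarrow>
              set_borel_measurable lborel {0<..<1} (M_eta \<eta> f) \<and>
              (\<integral>\<^sup>+ t\<in>{0<..<1}. ennreal (M_eta \<eta> f t powr p * \<eta> t) \<partial>lborel)
                \<le> ennreal C * (\<integral>\<^sup>+ s\<in>{0..<1}. ennreal (\<bar>f s\<bar> powr p * \<eta> s) \<partial>lborel))"
      using C part2[OF _ p] by blast
  qed
  show ?thesis using P1 P2 by (rule conjI)
qed

end
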